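(* Let $n=p+q\geq 3$, let $\mathfrak g=\mathfrak{so}(p+1,q+1)$ with the $|1|$-grading described below, and let $Z\in\mathfrak g_1$ satisfy $\langle Z,Z\rangle\neq 0$. Then: (1) $0=C(Z)\subset F(Z)=\{X\in\mathfrak g_{-1}: ZX=\langle X,X\rangle=0\}$ and $T(Z)=\left\{\frac{2}{\langle Z,Z\rangle}\mathbb I Z^t\right\}$. (2) For the unique element $X\in T(Z)$, the bracket $A=[Z,X]\in\mathfrak g_0$ is twice the grading element of $\mathfrak g$. In particular, $A$ acts diagonalizably on $\mathfrak g_{-1}$ and on each $\mathbb W$ in the list below, all eigenvalues of $A$ on $\mathfrak g_{-1}$ are non-positive with $0$-eigenspace equal to $C(Z)$, $\mathbb W_{ss}(A)=0$, and $\bigcap_{X\in T(Z)}\mathbb W_{st}(A)=0$ for each such $\mathbb W$.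
   Context: Let $\mathbb I=\mathrm{Id}_p\oplus(-\mathrm{Id}_q)$. Realize $\mathfrak g=\mathfrak{so}(p+1,q+1)$ as the matrices $\begin{pmatrix} a & Z & 0\\ X & A & -\mathbb I Z^t\\ 0 & -X^t\mathbb I & -a\end{pmatrix}$ with $a\in\mathbb R$, $X\in\mathbb R^n$ (column), $Z\in\mathbb R^{n*}$ (row), $A\in\mathfrak{so}(p,q)$; bracket is the matrix commutator. The components $\mathfrak g_{-1},\mathfrak g_0,\mathfrak g_1$ are given by $X$, $(A,a)$ and $Z$ respectively. $ZX$ is the real number given by the matrix product; $\langle X,Y\rangle=X^t\mathbb IY$ on $\mathfrak g_{-1}$ and $\langle Z,W\rangle=Z\mathbb IW^t$ on $\mathfrak g_1$. The grading element is the unique $E\in\mathfrak g$ with $\mathrm{ad}(E)=i$ on $\mathfrak g_i$, $i=-1,0,1$. For $Z\in\mathfrak g_1$: $C(Z)=\{X\in\mathfrak g_{-1}:[X,Z]=0\}$, $F(Z)=\{X\in\mathfrak g_{-1}:[X,[X,Z]]=0\}$, $T(Z)=\{X\in\mathfrak g_{-1}:[[Z,X],X]=-2X,\ [[Z,X],Z]=2Z\}$. The representations $\mathbb W$ of $\mathfrak g_0\cong\mathfrak{co}(p,q)$ carrying harmonic curvature: for $n\geq5$, the irreducible component of highest weight in $\Lambda^2\mathfrak g_1\otimes\mathfrak{so}(\mathfrak g_{-1})$ (Weyl tensors); for $n=3$, the irreducible component of highest weight in $\Lambda^2\mathfrak g_1\otimes\mathfrak g_1$ (Cotton–York tensors);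 for $n=4$, the two components of the Weyl-tensor space corresponding to the self-dual and anti-self-dual parts of $\Lambda^2\mathfrak g_1$. For $A$ acting diagonalizably on $\mathbb W$, $\mathbb W_{ss}(A)$ (resp. $\mathbb W_{st}(A)$) is the sum of the eigenspaces with negative (resp. non-positive) eigenvalues. *)

theory Defs
  imports "HOL-Analysis.Analysis"
begin

text \<open>The signature
  is fixed by a set P of indices: the diagonal of the matrix II is +1 on P and -1
  off P (so p = card P, q = n - card P).  Matrices of size (n+2) are indexed by
  'n + bool, where Inr True is the first row/column and Inr False the last.\<close>

definition eps :: "('n::finite) set \<Rightarrow> 'n \<Rightarrow> real" where
  "eps P i = (if i \<in> P then 1 else -1)"

definition Ibb :: "('n::finite) set \<Rightarrow> real^'n^'n" where
  "Ibb P = (\<chi> i j. if i = j then eps P i else 0)"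

definition so_pq :: "('n::finite) set \<Rightarrow> real^'n^'n \<Rightarrow> bool" where
  "so_pq P A \<longleftrightarrow> transpose A ** Ibb P + Ibb P ** A = 0"

text \<open>The block matrix  [[a, Z, 0], [X, A, -II Z^t], [0, -X^t II, -a]].
  Both the column X and the row Z are represented by vectors in real^'n.\<close>
definition genmat :: "('n::finite) set \<Rightarrow> real \<Rightarrow> real^'n \<Rightarrow> real^'n^'n \<Rightarrow> real^'n
      \<Rightarrow> real^('n + bool)^('n + bool)" where
  "genmat P a X A Z = (\<chi> r c. case (r, c) of
      (Inr True, Inr True) \<Rightarrow> a
    | (Inr True, Inl j) \<Rightarrow> Z $ j
    | (Inl i, Inr True) \<Rightarrow> X $ i
    | (Inl i, Inl j) \<Rightarrow> A $ i $ j
    | (Inl i, Inr False) \<Rightarrow> - ((Ibb P *v Z) $ i)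
    | (Inr False, Inl j) \<Rightarrow> - ((X v* Ibb P) $ j)
    | (Inr False, Inr False) \<Rightarrow> - a
    | _ \<Rightarrow> 0)"

definition gpq :: "('n::finite) set \<Rightarrow> (real^('n + bool)^('n + bool)) set" where
  "gpq P = {genmat P a X A Z | a X A Z. so_pq P A}"

definition br :: "real^('m::finite)^'m \<Rightarrow> real^'m^'m \<Rightarrow> real^'m^'m" where
  "br M N = M ** N - N ** M"

definition gm1 :: "('n::finite) set \<Rightarrow> real^'n \<Rightarrow> real^('n + bool)^('n + bool)" where
  "gm1 P X = genmat P 0 X 0 0"

definition gp1 :: "('n::finite) set \<Rightarrow> real^'n \<Rightarrow> real^('n + bool)^('n + bool)" where
  "gp1 P Z = genmat P 0 0 0 Z"

definition g_minus :: "('n::finite) set \<Rightarrow> (real^('n + bool)^('n + bool)) set" where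
  "g_minus P = range (gm1 P)"

definition g_plus :: "('n::finite) set \<Rightarrow> (real^('n + bool)^('n + bool)) set" where
  "g_plus P = range (gp1 P)"

definition g_zero :: "('n::finite) set \<Rightarrow> (real^('n + bool)^('n + bool)) set" where
  "g_zero P = {genmat P a 0 A 0 | a A. so_pq P A}"

text \<open>ZX is the matrix product (row times column); the forms on g_{-1} and g_1
  are X^t II Y and Z II W^t, both given by the same coordinate formula.\<close>
definition form_pq :: "('n::finite) set \<Rightarrow> real^'n \<Rightarrow> real^'n \<Rightarrow> real" where
  "form_pq P X Y = X \<bullet> (Ibb P *v Y)"

definition grading_element :: "('n::finite) set \<Rightarrow> real^('n + bool)^('n + bool)" where
  "grading_element P = (THE E. E \<in> gpq P
      \<and> (\<forall>x\<in>g_minus P. br E x = - x)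
      \<and> (\<forall>x\<in>g_zero P. br E x = 0)
      \<and> (\<forall>x\<in>g_plus P. br E x = x))"

definition CZ :: "('n::finite) set \<Rightarrow> real^('n + bool)^('n + bool) \<Rightarrow> (real^('n + bool)^('n + bool)) set" where
  "CZ P Zm = {x \<in> g_minus P. br x Zm = 0}"

definition FZ :: "('n::finite) set \<Rightarrow> real^('n + bool)^('n + bool) \<Rightarrow> (real^('n + bool)^('n + bool)) set" where
  "FZ P Zm = {x \<in> g_minus P. br x (br x Zm) = 0}"

definition TZ :: "('n::finite) set \<Rightarrow> real^('n + bool)^('n + bool) \<Rightarrow> (real^('n + bool)^('n + bool)) set" where
  "TZ P Zm = {x \<in> g_minus P. br (br Zm x) x = (-2) *\<^sub>R x \<and> br (br Zm x) Zm = 2 *\<^sub>R Zm}"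

definition eigsp :: "'v::real_vector set \<Rightarrow> ('v \<Rightarrow> 'v) \<Rightarrow> real \<Rightarrow> 'v set" where
  "eigsp W f c = {w \<in> W. f w = c *\<^sub>R w}"

definition diag_on :: "'v::real_vector set \<Rightarrow> ('v \<Rightarrow> 'v) \<Rightarrow> bool" where
  "diag_on W f \<longleftrightarrow> subspace W \<and> linear f \<and> (\<forall>w\<in>W. f w \<in> W)
       \<and> W \<subseteq> span (\<Union>c. eigsp W f c)"

definition W_ss :: "'v::real_vector set \<Rightarrow> ('v \<Rightarrow> 'v) \<Rightarrow> 'v set" where
  "W_ss W f = span (\<Union>c\<in>{c. c < 0}. eigsp W f c)"

definition W_st :: "'v::real_vector set \<Rightarrow> ('v \<Rightarrow> 'v) \<Rightarrow> 'v set" where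
  "W_st W f = span (\<Union>c\<in>{c. c \<le> 0}. eigsp W f c)"

definition m1coord :: "real^('n::finite + bool)^('n + bool) \<Rightarrow> real^'n" where
  "m1coord M = (\<chi> i. M $ Inl i $ Inr True)"

definition rho :: "('n::finite) set \<Rightarrow> real^('n + bool)^('n + bool) \<Rightarrow> real^'n \<Rightarrow> real^'n" where
  "rho P D X = m1coord (br D (gm1 P X))"

text \<open>Using the g_0-equivariant duality g_1 = (g_{-1})^* (Z \<mapsto> (X \<mapsto> ZX)),
  an element of Lambda^2 g_1 (x) so(g_{-1}) is a tensor R (components R i j k l =
  l-th component of R(e_i,e_j)e_k) antisymmetric in i,j and with R(e_i,e_j)
  skew for the form; an element of Lambda^2 g_1 (x) g_1 is a tensor C i j k
  antisymmetric in i,j.\<close>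

definition weyl_act :: "('n::finite) set \<Rightarrow> real^('n + bool)^('n + bool)
     \<Rightarrow> real^'n^'n^'n^'n \<Rightarrow> real^'n^'n^'n^'n" where
  "weyl_act P D R = (\<chi> i j k l.
       (\<Sum>m\<in>UNIV. rho P D (axis m 1) $ l * R $ i $ j $ k $ m)
     - (\<Sum>m\<in>UNIV. rho P D (axis i 1) $ m * R $ m $ j $ k $ l)
     - (\<Sum>m\<in>UNIV. rho P D (axis j 1) $ m * R $ i $ m $ k $ l)
     - (\<Sum>m\<in>UNIV. rho P D (axis k 1) $ m * R $ i $ j $ m $ l))"

definition cotton_act :: "('n::finite) set \<Rightarrow> real^('n + bool)^('n + bool)
     \<Rightarrow> real^'n^'n^'n \<Rightarrow> real^'n^'n^'n" where
  "cotton_act P D C = (\<chi> i j k.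
     - (\<Sum>m\<in>UNIV. rho P D (axis i 1) $ m * C $ m $ j $ k)
     - (\<Sum>m\<in>UNIV. rho P D (axis j 1) $ m * C $ i $ m $ k)
     - (\<Sum>m\<in>UNIV. rho P D (axis k 1) $ m * C $ i $ j $ m))"

text \<open>Weyl tensors: the highest-weight component of Lambda^2 g_1 (x) so(g_{-1}),
  i.e. tensors of that space satisfying the first Bianchi identity and with
  vanishing Ricci contraction.\<close>
definition weyl_space :: "('n::finite) set \<Rightarrow> (real^'n^'n^'n^'n) set" where
  "weyl_space P = {R. (\<forall>i j k l. R $ i $ j $ k $ l = - R $ j $ i $ k $ l)
     \<and> (\<forall>i j k l. eps P l * R $ i $ j $ k $ l = - (eps P k * R $ i $ j $ l $ k))
     \<and> (\<forall>i j k l. R $ i $ j $ k $ l + R $ j $ k $ i $ l + R $ k $ i $ j $ l = 0)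
     \<and> (\<forall>j k. (\<Sum>i\<in>UNIV. R $ i $ j $ k $ i) = 0)}"

text \<open>Cotton--York tensors: the highest-weight component of Lambda^2 g_1 (x) g_1,
  i.e. antisymmetric in the first pair, with vanishing cyclic sum and vanishing
  trace (contraction of the first and third slot with the form).\<close>
definition cotton_space :: "('n::finite) set \<Rightarrow> (real^'n^'n^'n) set" where
  "cotton_space P = {C. (\<forall>i j k. C $ i $ j $ k = - C $ j $ i $ k)
     \<and> (\<forall>i j k. C $ i $ j $ k + C $ j $ k $ i + C $ k $ i $ j = 0)
     \<and> (\<forall>j. (\<Sum>i\<in>UNIV. eps P i * C $ i $ j $ i) = 0)}"

definition g0_invariant :: "('n::finite) set \<Rightarrow> (real^('n + bool)^('n + bool) \<Rightarrow> 'v \<Rightarrow> 'v) \<Rightarrow> 'v set \<Rightarrow> bool" where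
  "g0_invariant P act W \<longleftrightarrow> (\<forall>D\<in>g_zero P. \<forall>w\<in>W. act D w \<in> W)"

definition harm_concl :: "('n::finite) set \<Rightarrow> (real^('n + bool)^('n + bool) \<Rightarrow> 'v::real_vector \<Rightarrow> 'v)
    \<Rightarrow> 'v set \<Rightarrow> real^('n + bool)^('n + bool) \<Rightarrow> real^('n + bool)^('n + bool) \<Rightarrow> bool" where
  "harm_concl P act W Zm A \<longleftrightarrow> diag_on W (act A) \<and> W_ss W (act A) = {0}
     \<and> (\<Inter>X\<in>TZ P Zm. W_st W (act (br Zm X))) = {0}"

end

theory Submission
  imports Defs
begin

lemma sum_sumtype:
  "(\<Sum>x\<in>(UNIV::('a::finite + bool) set). f x) = (\<Sum>i\<in>UNIV. f (Inl i)) + f (Inr True) + f (Inr False)"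
proof -
  have U: "(UNIV::('a + bool) set) = Inl ` UNIV \<union> Inr ` {True, False}"
    by (auto simp: UNIV_bool) (metis range_eqI sum.exhaust)
  show ?thesis unfolding U
    by (subst sum.union_disjoint) (auto simp: sum.reindex add.assoc)
qed

lemma eps_sq[simp]: "eps P i * eps P i = 1" "eps P i * (eps P i * x) = x"
  by (auto simp: eps_def)

lemma eps_sq3[simp]: "eps P i * a * (eps P i * b) = a * b"
  by (auto simp: eps_def)

lemma Ibb_mv[simp]: "(Ibb P *v z) $ i = eps P i * z $ i"
  by (simp add: Ibb_def matrix_vector_mult_def if_distrib if_distribR cong: if_cong)

lemma Ibb_vm[simp]: "(z v* Ibb P) $ i = eps P i * z $ i"
  by (simp add: Ibb_def vector_matrix_mult_def if_distrib if_distribR cong: if_cong)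

lemma genmat_simps[simp]:
  "genmat P a X A Z $ Inr True $ Inr True = a"
  "genmat P a X A Z $ Inr True $ Inl j = Z $ j"
  "genmat P a X A Z $ Inr True $ Inr False = 0"
  "genmat P a X A Z $ Inl i $ Inr True = X $ i"
  "genmat P a X A Z $ Inl i $ Inl j = A $ i $ j"
  "genmat P a X A Z $ Inl i $ Inr False = - (eps P i * Z $ i)"
  "genmat P a X A Z $ Inr False $ Inr True = 0"
  "genmat P a X A Z $ Inr False $ Inl j = - (eps P j * X $ j)"
  "genmat P a X A Z $ Inr False $ Inr False = - a"
  by (simp_all add: genmat_def)


lemma mat_eqI:
  fixes M N :: "real^('n::finite + bool)^('n + bool)"
  assumes "\<And>i j. M $ Inl i $ Inl j = N $ Inl i $ Inl j"
    "\<And>i. M $ Inl i $ Inr True = N $ Inl i $ Inr True"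
    "\<And>i. M $ Inl i $ Inr False = N $ Inl i $ Inr False"
    "\<And>j. M $ Inr True $ Inl j = N $ Inr True $ Inl j"
    "\<And>j. M $ Inr False $ Inl j = N $ Inr False $ Inl j"
    "M $ Inr True $ Inr True = N $ Inr True $ Inr True"
    "M $ Inr True $ Inr False = N $ Inr True $ Inr False"
    "M $ Inr False $ Inr True = N $ Inr False $ Inr True"
    "M $ Inr False $ Inr False = N $ Inr False $ Inr False"
  shows "M = N"
proof -
  have "M $ r $ c = N $ r $ c" for r c
  proof (cases r)
    case (Inl i) then show ?thesis
      using assms by (cases c) (auto, metis (full_types))
  next
    case (Inr b) then show ?thesis
      using assms by (cases c; cases b) (auto, (metis (full_types))+)
  qed
  then show ?thesis by (simp add: vec_eq_iff)
qed

lemma mult_entry: "((M::real^('n::finite + bool)^('m::finite)) ** N) $ r $ c =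
   (\<Sum>i\<in>UNIV. M $ r $ Inl i * N $ Inl i $ c) + M $ r $ Inr True * N $ Inr True $ c
   + M $ r $ Inr False * N $ Inr False $ c"
  by (simp add: matrix_matrix_mult_def sum_sumtype)


definition A0 :: "'n::finite set \<Rightarrow> real^'n \<Rightarrow> real^'n \<Rightarrow> real^'n^'n" where
  "A0 P z X = (\<chi> i j. X$i * z$j - eps P i * z$i * (eps P j * X$j))"

lemma brXZ: "br (gm1 P X) (gp1 P z) = genmat P (- (z \<bullet> X)) 0 (A0 P z X) 0"
  by (rule mat_eqI) (simp_all add: br_def gm1_def gp1_def mult_entry A0_def inner_vec_def mult.commute)


lemma br_anti: "br M N = - br N M"
  by (simp add: br_def)

lemma L2: "br (gm1 P X) (br (gm1 P X) (gp1 P z)) =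
   gm1 P ((-2*(z \<bullet> X)) *\<^sub>R X + form_pq P X X *\<^sub>R (Ibb P *v z))"
  unfolding brXZ
  apply (rule mat_eqI)
  apply (simp_all add: br_def gm1_def gp1_def mult_entry A0_def inner_vec_def form_pq_def
     sum_subtractf sum_distrib_left sum_distrib_right algebra_simps)
  apply (simp_all add: sum.distrib[symmetric] sum_negf[symmetric] algebra_simps)
  done

lemma L3: "br (br (gm1 P X) (gp1 P z)) (gp1 P z) =
   gp1 P (form_pq P z z *\<^sub>R (Ibb P *v X) - (2*(z \<bullet> X)) *\<^sub>R z)"
  unfolding brXZ
  apply (rule mat_eqI)
  apply (simp_all add: br_def gm1_def gp1_def mult_entry A0_def inner_vec_def form_pq_def
     sum_subtractf sum_distrib_left sum_distrib_right algebra_simps)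
  apply (simp_all add: sum.distrib[symmetric] sum_negf[symmetric] algebra_simps)
  done


lemma gm1_entry[simp]: "gm1 P X $ Inl i $ Inr True = X $ i"
  by (simp add: gm1_def)
lemma gp1_entry[simp]: "gp1 P X $ Inr True $ Inl i = X $ i"
  by (simp add: gp1_def)

lemma gm1_inj: "gm1 P X = gm1 P Y \<Longrightarrow> X = Y"
  by (metis gm1_entry vec_eq_iff)
lemma gp1_inj: "gp1 P X = gp1 P Y \<Longrightarrow> X = Y"
  by (metis gp1_entry vec_eq_iff)

lemma gm1_scale: "c *\<^sub>R gm1 P X = gm1 P (c *\<^sub>R X)"
  by (rule mat_eqI) (simp_all add: gm1_def)
lemma gp1_scale: "c *\<^sub>R gp1 P X = gp1 P (c *\<^sub>R X)"
  by (rule mat_eqI) (simp_all add: gp1_def)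
lemma gp1_uminus: "- gp1 P X = gp1 P (- X)"
  by (rule mat_eqI) (simp_all add: gp1_def)
lemma gm1_add: "gm1 P X + gm1 P Y = gm1 P (X + Y)"
  by (rule mat_eqI) (simp_all add: gm1_def algebra_simps)
lemma gm1_zero: "gm1 P 0 = 0"
  by (rule mat_eqI) (simp_all add: gm1_def)
lemma gm1_eq0: "gm1 P X = 0 \<longleftrightarrow> X = 0"
  using gm1_inj gm1_zero by metis

lemma genmat_zero: "genmat P a X A Z = 0 \<Longrightarrow> a = 0 \<and> X = 0 \<and> A = 0 \<and> Z = 0"
proof -
  assume h: "genmat P a X A Z = 0"
  have e: "genmat P a X A Z $ r $ c = 0" for r c using h by simp
  show ?thesis
    using e[of "Inr True" "Inr True"] e[of "Inl _" "Inr True"] e[of "Inl _" "Inl _"]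
      e[of "Inr True" "Inl _"]
    by (simp add: vec_eq_iff)
qed

lemma form_z_ne: "form_pq P z z \<noteq> 0 \<Longrightarrow> z \<noteq> 0"
  by (auto simp: form_pq_def)

lemma form_sum: "form_pq P X Y = (\<Sum>i\<in>UNIV. eps P i * X $ i * Y $ i)"
  by (simp add: form_pq_def inner_vec_def mult.left_commute mult.commute)

lemma CZ_eq:
  assumes s: "form_pq P z z \<noteq> 0"
  shows "CZ P (gp1 P z) = {0}"
proof -
  have "X = 0" if h: "br (gm1 P X) (gp1 P z) = 0" for X
  proof -
    from h[unfolded brXZ] have c: "z \<bullet> X = 0" and A: "A0 P z X = 0"
      using genmat_zero[of P "- (z \<bullet> X)" 0 "A0 P z X" 0] by auto
    have Aij: "X$i * z$j - eps P i * z$i * (eps P j * X$j) = 0" for i j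
      using A by (simp add: A0_def vec_eq_iff)
    have "X $ i = 0" for i
    proof -
      have "0 = (\<Sum>j\<in>UNIV. (X$i * z$j - eps P i * z$i * (eps P j * X$j)) * (eps P j * z$j))"
        using Aij by simp
      also have "\<dots> = X$i * form_pq P z z - eps P i * z$i * (z \<bullet> X)"
        by (simp add: form_sum inner_vec_def algebra_simps sum_subtractf sum_distrib_left)
      finally show ?thesis using c s by simp
    qed
    then show ?thesis by (simp add: vec_eq_iff)
  qed
  then have "CZ P (gp1 P z) \<subseteq> {0}" by (auto simp: CZ_def g_minus_def) (metis gm1_zero)
  moreover have "0 \<in> CZ P (gp1 P z)"
    unfolding CZ_def g_minus_def by (auto simp: br_def) (metis gm1_zero rangeI)
  ultimately show ?thesis by blast
qed


lemma Y_zero: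
  assumes s: "form_pq P z z \<noteq> 0"
  shows "(-2*(z \<bullet> X)) *\<^sub>R X + form_pq P X X *\<^sub>R (Ibb P *v z) = 0
     \<longleftrightarrow> z \<bullet> X = 0 \<and> form_pq P X X = 0"
proof
  assume h: "(-2*(z \<bullet> X)) *\<^sub>R X + form_pq P X X *\<^sub>R (Ibb P *v z) = 0"
  define c where "c = z \<bullet> X"
  define q where "q = form_pq P X X"
  have hi: "-2*c * X$i + q * (eps P i * z$i) = 0" for i
    using h unfolding c_def q_def by (simp add: vec_eq_iff)
  have q0: "q = 0"
  proof (rule ccontr)
    assume q: "q \<noteq> 0"
    have zi: "z$i = (2*c/q) * (eps P i * X$i)" for i
    proof -
      have b: "q * z$i = 2*c*(eps P i * X$i)"
        using hi[of i] by (cases "i \<in> P") (simp_all add: eps_def)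
      then show ?thesis using q by (simp add: field_simps)
    qed
    have "c = (\<Sum>i\<in>UNIV. z$i * X$i)" by (simp add: c_def inner_vec_def)
    also have "\<dots> = (2*c/q) * (\<Sum>i\<in>UNIV. eps P i * X$i * X$i)"
      by (simp add: zi sum_distrib_left mult.assoc)
    also have "\<dots> = (2*c/q) * q" by (simp add: q_def form_sum)
    also have "\<dots> = 2*c" using q by simp
    finally have "c = 0" by simp
    then have "z$i = 0" for i using zi by simp
    then have "z = 0" by (simp add: vec_eq_iff)
    then show False using s by (simp add: form_pq_def)
  qed
  then have "c * X$i = 0" for i using hi[of i] by simp
  then have "c = 0 \<or> X = 0" by (auto simp: vec_eq_iff)
  then have "c = 0" by (auto simp: c_def)
  then show "z \<bullet> X = 0 \<and> form_pq P X X = 0" using q0 by (simp add: c_def q_def)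
qed simp

lemma FZ_eq:
  assumes s: "form_pq P z z \<noteq> 0"
  shows "FZ P (gp1 P z) = {gm1 P X | X. z \<bullet> X = 0 \<and> form_pq P X X = 0}"
  unfolding FZ_def g_minus_def using Y_zero[OF s]
  by (auto simp: L2 gm1_eq0)


lemma br_uminus_left: "br (- M) N = - br M N"
  by (simp add: br_def vec_eq_iff matrix_matrix_mult_def sum_negf)

lemma T_iff:
  assumes s: "form_pq P z z \<noteq> 0"
  shows "((-2*(z \<bullet> X)) *\<^sub>R X + form_pq P X X *\<^sub>R (Ibb P *v z) = (-2) *\<^sub>R X
        \<and> - (form_pq P z z *\<^sub>R (Ibb P *v X) - (2*(z \<bullet> X)) *\<^sub>R z) = 2 *\<^sub>R z)
     \<longleftrightarrow> X = (2 / form_pq P z z) *\<^sub>R (Ibb P *v z)" (is "?L \<longleftrightarrow> ?R")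
proof
  assume L: ?L
  define c where "c = z \<bullet> X"
  define sz where "sz = form_pq P z z"
  have h2: "- (sz * (eps P i * X$i) - 2*c*z$i) = 2 * z$i" for i
    using conjunct2[OF L] unfolding c_def sz_def by (simp add: vec_eq_iff)
  have Xi: "X$i = ((2*c-2)/sz) * (eps P i * z$i)" for i
  proof -
    have "sz * X$i = (2*c-2) * (eps P i * z$i)"
      using h2[of i] by (cases "i \<in> P") (simp_all add: eps_def algebra_simps)
    then show ?thesis using s unfolding sz_def by (simp add: field_simps)
  qed
  have "c = (\<Sum>i\<in>UNIV. z$i * X$i)" by (simp add: c_def inner_vec_def)
  also have "\<dots> = ((2*c-2)/sz) * (\<Sum>i\<in>UNIV. eps P i * z$i * z$i)"
    by (simp add: Xi sum_distrib_left algebra_simps)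
  also have "\<dots> = 2*c-2" using s by (simp add: sz_def form_sum)
  finally have "c = 2" by simp
  then show ?R using Xi by (simp add: vec_eq_iff sz_def)
next
  assume R: ?R
  define sz where "sz = form_pq P z z"
  have Xi: "X$i = (2/sz) * (eps P i * z$i)" for i using R by (simp add: sz_def)
  have c: "z \<bullet> X = 2"
  proof -
    have "z \<bullet> X = (2/sz) * (\<Sum>i\<in>UNIV. eps P i * z$i * z$i)"
      by (simp add: inner_vec_def Xi sum_distrib_left algebra_simps)
    also have "\<dots> = 2" using s by (simp add: sz_def form_sum)
    finally show ?thesis .
  qed
  have q: "form_pq P X X = 4 / sz"
  proof -
    have "form_pq P X X = (2/sz)*(2/sz) * (\<Sum>i\<in>UNIV. eps P i * z$i * z$i)"
      by (simp add: form_sum Xi sum_distrib_left algebra_simps)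
    also have "\<dots> = 4/sz" using s by (simp add: sz_def form_sum field_simps)
    finally show ?thesis .
  qed
  show ?L using s
    by (simp add: c q vec_eq_iff Xi sz_def[symmetric] field_simps)
qed

lemma TZ_eq:
  assumes s: "form_pq P z z \<noteq> 0"
  shows "TZ P (gp1 P z) = {gm1 P ((2 / form_pq P z z) *\<^sub>R (Ibb P *v z))}"
proof -
  have "gm1 P X \<in> TZ P (gp1 P z) \<longleftrightarrow> X = (2 / form_pq P z z) *\<^sub>R (Ibb P *v z)" for X
  proof -
    have e1: "br (br (gp1 P z) (gm1 P X)) (gm1 P X) = br (gm1 P X) (br (gm1 P X) (gp1 P z))"
      by (metis br_anti br_uminus_left)
    have e2: "br (br (gp1 P z) (gm1 P X)) (gp1 P z) = - br (br (gm1 P X) (gp1 P z)) (gp1 P z)"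
      by (metis br_anti br_uminus_left)
    have "gm1 P X \<in> TZ P (gp1 P z) \<longleftrightarrow>
      gm1 P ((-2*(z \<bullet> X)) *\<^sub>R X + form_pq P X X *\<^sub>R (Ibb P *v z)) = gm1 P ((-2) *\<^sub>R X)
      \<and> gp1 P (- (form_pq P z z *\<^sub>R (Ibb P *v X) - (2*(z \<bullet> X)) *\<^sub>R z)) = gp1 P (2 *\<^sub>R z)"
      unfolding TZ_def g_minus_def mem_Collect_eq e1 e2 L2 L3 gm1_scale gp1_scale gp1_uminus
      by simp
    then show ?thesis using T_iff[OF s, of X] gm1_inj gp1_inj by metis
  qed
  note * = this
  show ?thesis
  proof (rule set_eqI)
    fix x show "x \<in> TZ P (gp1 P z) \<longleftrightarrow> x \<in> {gm1 P ((2 / form_pq P z z) *\<^sub>R (Ibb P *v z))}"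
    proof
      assume x: "x \<in> TZ P (gp1 P z)"
      then obtain X where "x = gm1 P X" by (auto simp: TZ_def g_minus_def)
      with x * show "x \<in> {gm1 P ((2 / form_pq P z z) *\<^sub>R (Ibb P *v z))}" by simp
    next
      assume "x \<in> {gm1 P ((2 / form_pq P z z) *\<^sub>R (Ibb P *v z))}"
      then show "x \<in> TZ P (gp1 P z)" using * by simp
    qed
  qed
qed


lemma axis_nth': "axis j (1::real) $ k = (if k = j then 1 else 0)"
  by (simp add: axis_def)

lemma sum_axis[simp]: "(\<Sum>k\<in>UNIV. f k * axis j (1::real) $ k) = f j"
  by (simp add: axis_nth' if_distrib if_distribR cong: if_cong)

lemma sum_axis'[simp]: "(\<Sum>k\<in>UNIV. axis j (1::real) $ k * f k) = f j"
  by (simp add: axis_nth' if_distrib if_distribR cong: if_cong)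

lemma ifprod: "(if b then x else 0) * (if c then y else (0::real)) = (if b \<and> c then x*y else 0)"
  by auto

definition E0 :: "'n::finite set \<Rightarrow> real^('n + bool)^('n + bool)" where
  "E0 P = genmat P 1 0 0 0"

lemma so_pq_0: "so_pq P 0"
  by (simp add: so_pq_def vec_eq_iff transpose_def matrix_matrix_mult_def)

lemma E0_gm1: "br (E0 P) (gm1 P X) = - gm1 P X"
  by (rule mat_eqI) (simp_all add: E0_def br_def gm1_def mult_entry)
lemma E0_gp1: "br (E0 P) (gp1 P X) = gp1 P X"
  by (rule mat_eqI) (simp_all add: E0_def br_def gp1_def mult_entry)
lemma E0_g0: "br (E0 P) (genmat P a 0 A 0) = 0"
  by (rule mat_eqI) (simp_all add: E0_def br_def mult_entry)

lemma E0_props: "E0 P \<in> gpq P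
      \<and> (\<forall>x\<in>g_minus P. br (E0 P) x = - x)
      \<and> (\<forall>x\<in>g_zero P. br (E0 P) x = 0)
      \<and> (\<forall>x\<in>g_plus P. br (E0 P) x = x)"
  by (auto simp: gpq_def E0_def[symmetric] g_minus_def g_zero_def g_plus_def E0_gm1 E0_gp1 E0_g0)
     (metis E0_def so_pq_0)

lemma E0_unique:
  fixes P :: "'n::finite set"
  assumes E: "E \<in> gpq P" and m: "\<forall>x\<in>g_minus P. br E x = - x"
    and z: "\<forall>x\<in>g_zero P. br E x = 0"
  shows "E = E0 P"
proof -
  obtain a Y A W where Ed: "E = genmat P a Y A W" and so: "so_pq P A"
    using E by (auto simp: gpq_def)
  have "E0 P \<in> g_zero P" using so_pq_0 by (auto simp: g_zero_def E0_def)
  then have b0: "br E (E0 P) = 0" using z by blast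
  have Y: "Y = 0"
  proof -
    have "br E (E0 P) $ Inl i $ Inr True = Y $ i" for i
      by (simp add: Ed E0_def br_def mult_entry)
    then show ?thesis using b0 by (simp add: vec_eq_iff)
  qed
  have W: "W = 0"
  proof -
    have "br E (E0 P) $ Inr True $ Inl i = - W $ i" for i
      by (simp add: Ed E0_def br_def mult_entry)
    then show ?thesis using b0 by (simp add: vec_eq_iff)
  qed
  have Aij: "A $ i $ j = (if i = j then a - 1 else 0)" for i j
  proof -
    have "gm1 P (axis j 1) \<in> g_minus P" by (simp add: g_minus_def)
    then have "br E (gm1 P (axis j 1)) $ Inl i $ Inr True = - (gm1 P (axis j 1) $ Inl i $ Inr True)"
      using m by simp
    then show ?thesis
      by (simp add: Ed Y W br_def mult_entry gm1_def) (auto simp: axis_nth')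
  qed
  obtain i0 :: 'n where True by blast
  have "(transpose A ** Ibb P + Ibb P ** A) $ i0 $ i0 = 0"
    using so by (simp add: so_pq_def)
  then have "2 * (a - 1) * eps P i0 = 0"
    by (simp add: transpose_def matrix_matrix_mult_def Ibb_def Aij ifprod conj_commute[of "i0 = _"] eq_commute[of i0]; blast)
  then have a: "a = 1" by (simp add: eps_def split: if_splits)
  have "A = 0" using Aij a by (simp add: vec_eq_iff)
  then show ?thesis by (simp add: Ed Y W a E0_def)
qed

lemma grading_element_eq: "grading_element P = E0 P"
  unfolding grading_element_def
  apply (rule the_equality)
  using E0_props apply blast
  using E0_unique by blast


lemma zX0: "form_pq P z z \<noteq> 0 \<Longrightarrow> z \<bullet> ((2 / form_pq P z z) *\<^sub>R (Ibb P *v z)) = 2"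
  by (simp add: form_pq_def[symmetric])

lemma A0_X0: "A0 P z ((2 / form_pq P z z) *\<^sub>R (Ibb P *v z)) = 0"
  by (simp add: A0_def vec_eq_iff algebra_simps)

lemma brZX: "br (gp1 P z) (gm1 P X) = - genmat P (- (z \<bullet> X)) 0 (A0 P z X) 0"
  by (metis br_anti brXZ)

lemma A_eq:
  assumes s: "form_pq P z z \<noteq> 0"
  shows "br (gp1 P z) (gm1 P ((2 / form_pq P z z) *\<^sub>R (Ibb P *v z))) = 2 *\<^sub>R E0 P"
proof -
  have "br (gp1 P z) (gm1 P ((2 / form_pq P z z) *\<^sub>R (Ibb P *v z)))
     = - genmat P (-2) 0 0 0"
    using brZX[of P z "(2 / form_pq P z z) *\<^sub>R (Ibb P *v z)"] by (simp add: A0_X0 form_pq_def[symmetric] s)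
  also have "\<dots> = 2 *\<^sub>R E0 P"
    by (rule mat_eqI) (simp_all add: E0_def)
  finally show ?thesis .
qed

lemma br_scale: "br (c *\<^sub>R M) N = c *\<^sub>R br M N"
  by (simp add: br_def vec_eq_iff matrix_matrix_mult_def sum_distrib_left algebra_simps)

lemma gm1_uminus: "- gm1 P X = gm1 P (- X)"
  by (rule mat_eqI) (simp_all add: gm1_def)

lemma A_gm1: "br (2 *\<^sub>R E0 P) (gm1 P Y) = gm1 P ((-2) *\<^sub>R Y)"
  by (simp add: br_scale E0_gm1 gm1_scale gm1_uminus)

lemma A_gm1': "x \<in> g_minus P \<Longrightarrow> br (2 *\<^sub>R E0 P) x = (-2) *\<^sub>R x"
  by (auto simp: g_minus_def A_gm1 gm1_scale gm1_uminus)

lemma linear_br: "linear (br M)"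
  by (rule linearI) (simp_all add: br_def vec_eq_iff matrix_matrix_mult_def sum.distrib
      sum_distrib_left algebra_simps)

lemma subspace_g_minus: "subspace (g_minus P)"
  unfolding subspace_def g_minus_def
  by (auto simp: gm1_add gm1_scale) (metis gm1_zero rangeI)

lemma m1coord_gm1: "m1coord (gm1 P X) = X"
  by (simp add: m1coord_def vec_eq_iff)

lemma rho_A: "rho P (2 *\<^sub>R E0 P) (axis m 1) $ l = (if m = l then -2 else 0)"
  by (simp add: rho_def A_gm1 m1coord_gm1 axis_nth')

lemma sum_if1[simp]: "(\<Sum>m\<in>UNIV. (if m = a then c else 0) * (f m::real)) = c * f (a::'a::finite)"
proof -
  have "(\<Sum>m\<in>UNIV. (if m = a then c else 0) * f m) = (\<Sum>m\<in>UNIV. if m = a then c * f m else 0)"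
    by (rule sum.cong) auto
  then show ?thesis by simp
qed

lemma sum_if2[simp]: "(\<Sum>m\<in>UNIV. (if a = m then c else 0) * (f m::real)) = c * f (a::'a::finite)"
  using sum_if1[of a c f] by (simp add: eq_commute[of a])

lemma weyl_A: "weyl_act P (2 *\<^sub>R E0 P) R = 4 *\<^sub>R R"
  by (simp add: weyl_act_def rho_A vec_eq_iff)

lemma cotton_A: "cotton_act P (2 *\<^sub>R E0 P) R = 6 *\<^sub>R R"
  by (simp add: cotton_act_def rho_A vec_eq_iff)

lemma subspace_weyl: "subspace (weyl_space P)"
  unfolding subspace_def
proof (intro conjI ballI allI)
  show "0 \<in> weyl_space P" by (simp add: weyl_space_def)
next
  fix R S assume R: "R \<in> weyl_space P" and S: "S \<in> weyl_space P"
  from R have R1: "\<And>i j k l. R $ i $ j $ k $ l = - R $ j $ i $ k $ l"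
    and R2: "\<And>i j k l. eps P l * R $ i $ j $ k $ l = - (eps P k * R $ i $ j $ l $ k)"
    and R3: "\<And>i j k l. R $ i $ j $ k $ l + R $ j $ k $ i $ l + R $ k $ i $ j $ l = 0"
    and R4: "\<And>j k. (\<Sum>i\<in>UNIV. R $ i $ j $ k $ i) = 0"
    unfolding weyl_space_def by blast+
  from S have S1: "\<And>i j k l. S $ i $ j $ k $ l = - S $ j $ i $ k $ l"
    and S2: "\<And>i j k l. eps P l * S $ i $ j $ k $ l = - (eps P k * S $ i $ j $ l $ k)"
    and S3: "\<And>i j k l. S $ i $ j $ k $ l + S $ j $ k $ i $ l + S $ k $ i $ j $ l = 0"
    and S4: "\<And>j k. (\<Sum>i\<in>UNIV. S $ i $ j $ k $ i) = 0"
    unfolding weyl_space_def by blast+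
  show "R + S \<in> weyl_space P"
    unfolding weyl_space_def mem_Collect_eq
  proof (intro conjI allI)
    fix i j k l
    show "(R + S) $ i $ j $ k $ l = - (R + S) $ j $ i $ k $ l"
      using R1[of i j k l] S1[of i j k l] by simp
    show "eps P l * (R + S) $ i $ j $ k $ l = - (eps P k * (R + S) $ i $ j $ l $ k)"
      using R2[of l i j k] S2[of l i j k] by (simp add: algebra_simps)
    show "(R + S) $ i $ j $ k $ l + (R + S) $ j $ k $ i $ l + (R + S) $ k $ i $ j $ l = 0"
      using R3[of i j k l] S3[of i j k l] by simp
  next
    fix j k
    show "(\<Sum>i\<in>UNIV. (R + S) $ i $ j $ k $ i) = 0"
      using R4[of j k] S4[of j k] by (simp add: sum.distrib)
  qed
next
  fix c :: real and R assume R: "R \<in> weyl_space P"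
  from R have R1: "\<And>i j k l. R $ i $ j $ k $ l = - R $ j $ i $ k $ l"
    and R2: "\<And>i j k l. eps P l * R $ i $ j $ k $ l = - (eps P k * R $ i $ j $ l $ k)"
    and R3: "\<And>i j k l. R $ i $ j $ k $ l + R $ j $ k $ i $ l + R $ k $ i $ j $ l = 0"
    and R4: "\<And>j k. (\<Sum>i\<in>UNIV. R $ i $ j $ k $ i) = 0"
    unfolding weyl_space_def by blast+
  show "c *\<^sub>R R \<in> weyl_space P"
    unfolding weyl_space_def mem_Collect_eq
  proof (intro conjI allI)
    fix i j k l
    show "(c *\<^sub>R R) $ i $ j $ k $ l = - (c *\<^sub>R R) $ j $ i $ k $ l"
      using R1[of i j k l] by simp
    show "eps P l * (c *\<^sub>R R) $ i $ j $ k $ l = - (eps P k * (c *\<^sub>R R) $ i $ j $ l $ k)"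
      using arg_cong[OF R2[of l i j k], of "\<lambda>t. c * t"] by (simp add: algebra_simps)
    show "(c *\<^sub>R R) $ i $ j $ k $ l + (c *\<^sub>R R) $ j $ k $ i $ l + (c *\<^sub>R R) $ k $ i $ j $ l = 0"
      using arg_cong[OF R3[of i j k l], of "\<lambda>t. c * t"] by (simp add: algebra_simps)
  next
    fix j k
    show "(\<Sum>i\<in>UNIV. (c *\<^sub>R R) $ i $ j $ k $ i) = 0"
      using R4[of j k] by (simp add: sum_distrib_left[symmetric])
  qed
qed

lemma subspace_cotton: "subspace (cotton_space P)"
  unfolding subspace_def
proof (intro conjI ballI allI)
  show "0 \<in> cotton_space P" by (simp add: cotton_space_def)
next
  fix R S assume R: "R \<in> cotton_space P" and S: "S \<in> cotton_space P"
  from R have R1: "\<And>i j k. R $ i $ j $ k = - R $ j $ i $ k"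
    and R3: "\<And>i j k. R $ i $ j $ k + R $ j $ k $ i + R $ k $ i $ j = 0"
    and R4: "\<And>j. (\<Sum>i\<in>UNIV. eps P i * R $ i $ j $ i) = 0"
    unfolding cotton_space_def by blast+
  from S have S1: "\<And>i j k. S $ i $ j $ k = - S $ j $ i $ k"
    and S3: "\<And>i j k. S $ i $ j $ k + S $ j $ k $ i + S $ k $ i $ j = 0"
    and S4: "\<And>j. (\<Sum>i\<in>UNIV. eps P i * S $ i $ j $ i) = 0"
    unfolding cotton_space_def by blast+
  show "R + S \<in> cotton_space P"
    unfolding cotton_space_def mem_Collect_eq
  proof (intro conjI allI)
    fix i j k
    show "(R + S) $ i $ j $ k = - (R + S) $ j $ i $ k"
      using R1[of i j k] S1[of i j k] by simp
    show "(R + S) $ i $ j $ k + (R + S) $ j $ k $ i + (R + S) $ k $ i $ j = 0"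
      using R3[of i j k] S3[of i j k] by simp
  next
    fix j
    show "(\<Sum>i\<in>UNIV. eps P i * (R + S) $ i $ j $ i) = 0"
      using R4[of j] S4[of j] by (simp add: sum.distrib algebra_simps)
  qed
next
  fix c :: real and R assume R: "R \<in> cotton_space P"
  from R have R1: "\<And>i j k. R $ i $ j $ k = - R $ j $ i $ k"
    and R3: "\<And>i j k. R $ i $ j $ k + R $ j $ k $ i + R $ k $ i $ j = 0"
    and R4: "\<And>j. (\<Sum>i\<in>UNIV. eps P i * R $ i $ j $ i) = 0"
    unfolding cotton_space_def by blast+
  show "c *\<^sub>R R \<in> cotton_space P"
    unfolding cotton_space_def mem_Collect_eq
  proof (intro conjI allI)
    fix i j k
    show "(c *\<^sub>R R) $ i $ j $ k = - (c *\<^sub>R R) $ j $ i $ k"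
      using R1[of i j k] by simp
    show "(c *\<^sub>R R) $ i $ j $ k + (c *\<^sub>R R) $ j $ k $ i + (c *\<^sub>R R) $ k $ i $ j = 0"
      using arg_cong[OF R3[of i j k], of "\<lambda>t. c * t"] by (simp add: algebra_simps)
  next
    fix j
    have "(\<Sum>i\<in>UNIV. eps P i * (c *\<^sub>R R) $ i $ j $ i) = c * (\<Sum>i\<in>UNIV. eps P i * R $ i $ j $ i)"
      by (simp add: sum_distrib_left algebra_simps)
    then show "(\<Sum>i\<in>UNIV. eps P i * (c *\<^sub>R R) $ i $ j $ i) = 0"
      using R4[of j] by simp
  qed
qed


lemma harm_gen:
  fixes f :: "'v::real_vector \<Rightarrow> 'v"
  assumes W: "subspace W" and f: "\<And>w. f w = k *\<^sub>R w" and k: "k > 0"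
  shows "diag_on W f \<and> W_ss W f = {0} \<and> W_st W f = {0}"
proof -
  have lin: "linear f"
    by (rule linearI) (simp_all add: f algebra_simps)
  have eig: "eigsp W f c \<subseteq> {0}" if "c \<noteq> k" for c
  proof
    fix w assume "w \<in> eigsp W f c"
    then have "k *\<^sub>R w = c *\<^sub>R w" by (simp add: eigsp_def f)
    then have "(k - c) *\<^sub>R w = 0" by (simp add: algebra_simps)
    then show "w \<in> {0}" using that by simp
  qed
  have "W \<subseteq> span (\<Union>c. eigsp W f c)"
  proof
    fix w assume "w \<in> W"
    then have "w \<in> eigsp W f k" by (simp add: eigsp_def f)
    then show "w \<in> span (\<Union>c. eigsp W f c)" by (meson UNIV_I UN_I span_base)
  qed
  then have d: "diag_on W f"
    using W lin by (simp add: diag_on_def f subspace_scale)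
  have z: "span (\<Union>c\<in>{c. c \<le> 0}. eigsp W f c) = {0}"
  proof -
    have "(\<Union>c\<in>{c. c \<le> 0}. eigsp W f c) \<subseteq> {0}"
    proof (rule UN_least)
      fix c :: real assume "c \<in> {c. c \<le> 0}" then show "eigsp W f c \<subseteq> {0}" using eig k by auto
    qed
    then have "span (\<Union>c\<in>{c. c \<le> 0}. eigsp W f c) \<subseteq> span {0}" by (rule span_mono)
    then show ?thesis using span_zero by auto
  qed
  have z2: "span (\<Union>c\<in>{c. c < 0}. eigsp W f c) = {0}"
  proof -
    have "(\<Union>c\<in>{c. c < 0}. eigsp W f c) \<subseteq> {0}"
    proof (rule UN_least)
      fix c :: real assume "c \<in> {c. c < 0}" then show "eigsp W f c \<subseteq> {0}" using eig k by auto
    qed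
    then have "span (\<Union>c\<in>{c. c < 0}. eigsp W f c) \<subseteq> span {0}" by (rule span_mono)
    then show ?thesis using span_zero by auto
  qed
  show ?thesis using d z z2 by (simp add: W_ss_def W_st_def)
qed

lemma harm_concl_gen:
  assumes s: "form_pq P z z \<noteq> 0" and W: "subspace W"
    and act: "\<And>w. act (2 *\<^sub>R E0 P) w = k *\<^sub>R w" and k: "k > 0"
  shows "harm_concl P act W (gp1 P z) (2 *\<^sub>R E0 P)"
  using harm_gen[OF W act k] A_eq[OF s]
  by (simp add: harm_concl_def TZ_eq[OF s])

theorem lemma3p4:
  fixes P :: "'n::finite set" and z :: "real^'n"
  assumes n3: "CARD('n) \<ge> 3"
    and nonnull: "form_pq P z z \<noteq> 0"
  shows "CZ P (gp1 P z) = {0}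
    \<and> CZ P (gp1 P z) \<subseteq> FZ P (gp1 P z)
    \<and> FZ P (gp1 P z) = {gm1 P X | X. z \<bullet> X = 0 \<and> form_pq P X X = 0}
    \<and> TZ P (gp1 P z) = {gm1 P ((2 / form_pq P z z) *\<^sub>R (Ibb P *v z))}
    \<and> (\<forall>X\<in>TZ P (gp1 P z).
         let A = br (gp1 P z) X in
           A = 2 *\<^sub>R grading_element P
         \<and> diag_on (g_minus P) (br A)
         \<and> (\<forall>c. (\<exists>w\<in>g_minus P. w \<noteq> 0 \<and> br A w = c *\<^sub>R w) \<longrightarrow> c \<le> 0)
         \<and> eigsp (g_minus P) (br A) 0 = CZ P (gp1 P z)
         \<and> (CARD('n) \<ge> 5 \<longrightarrow> harm_concl P (weyl_act P) (weyl_space P) (gp1 P z) A)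
         \<and> (CARD('n) = 4 \<longrightarrow> (\<forall>W. subspace W \<and> W \<subseteq> weyl_space P
               \<and> g0_invariant P (weyl_act P) W
               \<longrightarrow> harm_concl P (weyl_act P) W (gp1 P z) A))
         \<and> (CARD('n) = 3 \<longrightarrow> harm_concl P (cotton_act P) (cotton_space P) (gp1 P z) A))"
proof -
  note s = nonnull
  define A where "A = 2 *\<^sub>R E0 P"
  have CZ: "CZ P (gp1 P z) = {0}" by (rule CZ_eq[OF s])
  have FZ: "FZ P (gp1 P z) = {gm1 P X | X. z \<bullet> X = 0 \<and> form_pq P X X = 0}" by (rule FZ_eq[OF s])
  have sub: "CZ P (gp1 P z) \<subseteq> FZ P (gp1 P z)"
    unfolding CZ FZ by (auto intro!: exI[of _ 0] simp: gm1_zero form_pq_def)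
  have TZ: "TZ P (gp1 P z) = {gm1 P ((2 / form_pq P z z) *\<^sub>R (Ibb P *v z))}" by (rule TZ_eq[OF s])
  have Am: "\<And>x. x \<in> g_minus P \<Longrightarrow> br A x = (-2) *\<^sub>R x"
    unfolding A_def by (rule A_gm1')
  have diag: "diag_on (g_minus P) (br A)"
  proof -
    have "g_minus P \<subseteq> span (\<Union>c. eigsp (g_minus P) (br A) c)"
    proof
      fix w assume "w \<in> g_minus P"
      then have "w \<in> eigsp (g_minus P) (br A) (-2)" by (simp add: eigsp_def Am)
      then show "w \<in> span (\<Union>c. eigsp (g_minus P) (br A) c)" by (meson UNIV_I UN_I span_base)
    qed
    then show ?thesis
      using subspace_g_minus[of P] linear_br[of A] subspace_neg[OF subspace_g_minus[of P]] subspace_scale[OF subspace_g_minus[of P]]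
      by (simp add: diag_on_def Am)
  qed
  have eigv: "\<forall>c. (\<exists>w\<in>g_minus P. w \<noteq> 0 \<and> br A w = c *\<^sub>R w) \<longrightarrow> c \<le> 0"
  proof (intro allI impI)
    fix c assume "\<exists>w\<in>g_minus P. w \<noteq> 0 \<and> br A w = c *\<^sub>R w"
    then obtain w where "w \<in> g_minus P" "w \<noteq> 0" "br A w = c *\<^sub>R w" by blast
    then have "(c + 2) *\<^sub>R w = 0" using Am
      by (simp add: scaleR_add_left) (metis add.commute neg_eq_iff_add_eq_0)
    then have "c = -2" using \<open>w \<noteq> 0\<close> by simp
    then show "c \<le> 0" by simp
  qed
  have eig0: "eigsp (g_minus P) (br A) 0 = CZ P (gp1 P z)"
    unfolding CZ eigsp_def using Am subspace_0[OF subspace_g_minus[of P]]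
    by auto
  have hW: "harm_concl P (weyl_act P) W (gp1 P z) A" if "subspace W" for W
    unfolding A_def by (rule harm_concl_gen[OF s that, of "weyl_act P" 4]) (simp_all add: weyl_A)
  have hC: "harm_concl P (cotton_act P) (cotton_space P) (gp1 P z) A"
    unfolding A_def by (rule harm_concl_gen[OF s subspace_cotton, of "cotton_act P" 6]) (simp_all add: cotton_A)
  have AX: "br (gp1 P z) X = A" if "X \<in> TZ P (gp1 P z)" for X
    using that TZ A_eq[OF s] by (simp add: A_def)
  show ?thesis
    using CZ sub FZ TZ AX diag eigv eig0 hW[OF subspace_weyl] hW hC
    by (simp add: Let_def grading_element_eq A_def)
qed

end
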